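(* The function $\Phi(M^1,\dots,M^n)=\sum_{p\in N}2|M^p|+|M^I(M^1,\dots,M^n)|$ is in general not a potential function for the #-KEG with more than two players: there exist a 3-player #-KEG instance, a deterministic maximum-cardinality IA algorithm $\mathcal{A}$, and a sequence of unilateral deviations of one player, each strictly increasing that player's utility, along which $\Phi$ does not strictly increase at every step.
   Context: The #-KEG: players $N=\{1,\dots,n\}$; player $p$ has internal graph $G^p=(V^p,E^p)$ (pairwise disjoint vertex sets); $E^I$ is a set of external edges each joining vertices of two different players; $G=(V,E)$ with $V=\bigcup_pV^p$, $E=E^I\cup\bigcup_pE^p$. A strategy of player $p$ is a matching $M^p$ of $G^p$; the IA selects, via a deterministic algorithm $\mathcal{A}$, a maximum-cardinality matching $M^I(M^1,\dots,M^n)$ of the external edges whose endpoints are uncovered by $\bigcup_pM^p$. Player $p$'s utility is $2|M^p|+|M^I_p|$, where $M^I_p$ is the set of edges of $M^I$ incident to $V^p$. A function $\Phi$ on strategy profiles is a potential function if its value strictly increases whenever a player unilaterally switches to a strategy that strictly increases her utility. *)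

theory Defs
  imports Main
begin

text \<open>V p is the vertex set of player p, E p the edge set of the internal graph G^p,
  EI the set of external edges.\<close>

definition players :: "nat \<Rightarrow> nat set" where
  "players n = {1..n}"

definition is_matching :: "nat set set \<Rightarrow> bool" where
  "is_matching M \<longleftrightarrow> (\<forall>e\<in>M. \<forall>e'\<in>M. e \<noteq> e' \<longrightarrow> e \<inter> e' = {})"

definition keg :: "nat \<Rightarrow> (nat \<Rightarrow> nat set) \<Rightarrow> (nat \<Rightarrow> nat set set) \<Rightarrow> nat set set \<Rightarrow> bool" where
  "keg n V E EI \<longleftrightarrow>
     (\<forall>p\<in>players n. finite (V p)) \<and>
     (\<forall>p\<in>players n. \<forall>q\<in>players n. p \<noteq> q \<longrightarrow> V p \<inter> V q = {}) \<and>
     (\<forall>p\<in>players n. \<forall>e\<in>E p. card e = 2 \<and> e \<subseteq> V p) \<and>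
     (\<forall>e\<in>EI. card e = 2 \<and>
        (\<exists>p\<in>players n. \<exists>q\<in>players n. p \<noteq> q \<and> e \<inter> V p \<noteq> {} \<and> e \<inter> V q \<noteq> {} \<and>
            e \<subseteq> V p \<union> V q))"

definition profile :: "nat \<Rightarrow> (nat \<Rightarrow> nat set set) \<Rightarrow> (nat \<Rightarrow> nat set set) \<Rightarrow> bool" where
  "profile n E M \<longleftrightarrow> (\<forall>p\<in>players n. M p \<subseteq> E p \<and> is_matching (M p)) \<and>
                      (\<forall>p. p \<notin> players n \<longrightarrow> M p = {})"

definition covered :: "nat \<Rightarrow> (nat \<Rightarrow> nat set set) \<Rightarrow> nat set" where
  "covered n M = (\<Union>p\<in>players n. \<Union>(M p))"

definition available_ext :: "nat \<Rightarrow> nat set set \<Rightarrow> (nat \<Rightarrow> nat set set) \<Rightarrow> nat set set" where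
  "available_ext n EI M = {e\<in>EI. e \<inter> covered n M = {}}"

definition max_card_matching :: "nat set set \<Rightarrow> nat set set \<Rightarrow> bool" where
  "max_card_matching F M \<longleftrightarrow> M \<subseteq> F \<and> is_matching M \<and>
     (\<forall>M'. M' \<subseteq> F \<and> is_matching M' \<longrightarrow> card M' \<le> card M)"

definition ia_algorithm :: "nat \<Rightarrow> (nat \<Rightarrow> nat set set) \<Rightarrow> nat set set
      \<Rightarrow> ((nat \<Rightarrow> nat set set) \<Rightarrow> nat set set) \<Rightarrow> bool" where
  "ia_algorithm n E EI A \<longleftrightarrow>
     (\<forall>M. profile n E M \<longrightarrow> max_card_matching (available_ext n EI M) (A M))"

definition utility :: "((nat \<Rightarrow> nat set set) \<Rightarrow> nat set set) \<Rightarrow> (nat \<Rightarrow> nat set)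
      \<Rightarrow> nat \<Rightarrow> (nat \<Rightarrow> nat set set) \<Rightarrow> nat" where
  "utility A V p M = 2 * card (M p) + card {e\<in>A M. e \<inter> V p \<noteq> {}}"

definition Phi :: "nat \<Rightarrow> ((nat \<Rightarrow> nat set set) \<Rightarrow> nat set set) \<Rightarrow> (nat \<Rightarrow> nat set set) \<Rightarrow> nat" where
  "Phi n A M = (\<Sum>p\<in>players n. 2 * card (M p)) + card (A M)"

definition unilateral :: "nat \<Rightarrow> (nat \<Rightarrow> nat set set) \<Rightarrow> (nat \<Rightarrow> nat set set) \<Rightarrow> bool" where
  "unilateral p M M' \<longleftrightarrow> (\<forall>q. q \<noteq> p \<longrightarrow> M' q = M q)"

end

theory Submission
  imports Defs
begin

lemma ex_mcm:
  assumes "finite F"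
  shows "\<exists>M. max_card_matching F M"
proof -
  define S where "S = {M. M \<subseteq> F \<and> is_matching M}"
  have fin: "finite S" unfolding S_def using assms by auto
  have ne: "{} \<in> S" unfolding S_def is_matching_def by auto
  have "Max (card ` S) \<in> card ` S" using fin ne by (intro Max_in) auto
  then obtain M where M: "M \<in> S" "card M = Max (card ` S)" by auto
  have "\<forall>M'\<in>S. card M' \<le> card M" using fin M(2) by auto
  then show ?thesis using M(1) unfolding max_card_matching_def S_def by blast
qed

lemma le1:
  assumes "M' \<subseteq> {a, b}" "is_matching M'" "a \<inter> b \<noteq> {}"
  shows "card M' \<le> 1"
proof -
  have "M' \<subseteq> {a} \<or> M' \<subseteq> {b}"
    using assms unfolding is_matching_def by blast
  then show ?thesis
    by (metis card.empty card.insert_remove card_mono empty_iff finite.emptyI finite.insertI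
        Diff_empty insert_absorb2 order_refl subset_singleton_iff le_zero_eq
        card_0_eq le_numeral_extra(4) One_nat_def card_1_singleton_iff linorder_le_cases
        le_SucI)
qed

theorem mainTheorem5:
  shows "\<exists>(V :: nat \<Rightarrow> nat set) (E :: nat \<Rightarrow> nat set set) (EI :: nat set set)
            (A :: (nat \<Rightarrow> nat set set) \<Rightarrow> nat set set) (ss :: (nat \<Rightarrow> nat set set) list).
     keg 3 V E EI \<and> ia_algorithm 3 E EI A \<and>
     length ss \<ge> 2 \<and>
     (\<forall>M\<in>set ss. profile 3 E M) \<and>
     (\<forall>i < length ss - 1. \<exists>p\<in>players 3.
        unilateral p (ss ! i) (ss ! Suc i) \<and>
        utility A V p (ss ! i) < utility A V p (ss ! Suc i)) \<and>
     (\<exists>i < length ss - 1. Phi 3 A (ss ! Suc i) \<le> Phi 3 A (ss ! i))"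
proof -
  define V :: "nat \<Rightarrow> nat set" where "V = (\<lambda>p. if p = 1 then {1,2,3} else if p = 2 then {4} else if p = 3 then {5} else {})"
  define E :: "nat \<Rightarrow> nat set set" where "E = (\<lambda>p. if p = 1 then {{1,2},{2,3}} else {})"
  define EI :: "nat set set" where "EI = {{3,4},{1,4},{4,5}}"
  define S :: "nat \<Rightarrow> nat set set" where "S = (\<lambda>p. if p = 1 then {{1,2}} else {})"
  define S' :: "nat \<Rightarrow> nat set set" where "S' = (\<lambda>p. if p = 1 then {{2,3}} else {})"
  define A :: "(nat \<Rightarrow> nat set set) \<Rightarrow> nat set set" where
    "A = (\<lambda>M. if M = S then {{4,5}} else if M = S' then {{1,4}}
             else (SOME X. max_card_matching (available_ext 3 EI M) X))"
  have P3: "players 3 = {1,2,3}" unfolding players_def by auto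
  have SS': "S \<noteq> S'" unfolding S_def S'_def by (auto dest: fun_cong[where x=1] simp: doubleton_eq_iff)
  have keg: "keg 3 V E EI"
    unfolding keg_def P3 V_def E_def EI_def by auto
  have avS: "available_ext 3 EI S = {{3,4},{4,5}}"
    unfolding available_ext_def covered_def P3 S_def EI_def by auto
  have avS': "available_ext 3 EI S' = {{1,4},{4,5}}"
    unfolding available_ext_def covered_def P3 S'_def EI_def by auto
  have mS: "max_card_matching (available_ext 3 EI S) {{4,5}}"
    unfolding avS max_card_matching_def
    using le1[of _ "{3,4}" "{4,5}"] by (auto simp: is_matching_def)
  have mS': "max_card_matching (available_ext 3 EI S') {{1,4}}"
    unfolding avS' max_card_matching_def
    using le1[of _ "{1,4}" "{4,5}"] by (auto simp: is_matching_def)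
  have ia: "ia_algorithm 3 E EI A"
    unfolding ia_algorithm_def
  proof (intro allI impI)
    fix M assume "profile 3 E M"
    have "finite (available_ext 3 EI M)" unfolding available_ext_def EI_def by auto
    then have "\<exists>X. max_card_matching (available_ext 3 EI M) X" by (rule ex_mcm)
    then show "max_card_matching (available_ext 3 EI M) (A M)"
      unfolding A_def using mS mS' SS' by (auto intro: someI_ex)
  qed
  have prof: "profile 3 E S" "profile 3 E S'"
    unfolding profile_def P3 E_def S_def S'_def is_matching_def by auto
  have AS: "A S = {{4,5}}" "A S' = {{1,4}}" unfolding A_def using SS' by auto
  have u1: "utility A V 1 S = 2" unfolding utility_def AS by (simp add: S_def V_def)
  have u2: "utility A V 1 S' = 3"
  proof -
    have "{e \<in> {{1,4}}. e \<inter> {1,2,3} \<noteq> {}} = {{1::nat,4}}" by auto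
    then show ?thesis unfolding utility_def AS by (simp add: S'_def V_def)
  qed
  have ph1: "Phi 3 A S = 3" unfolding Phi_def AS P3 by (simp add: S_def)
  have ph2: "Phi 3 A S' = 3" unfolding Phi_def AS P3 by (simp add: S'_def)
  have un: "unilateral 1 S S'" unfolding unilateral_def S_def S'_def by auto
  show ?thesis
    apply (rule exI[of _ V], rule exI[of _ E], rule exI[of _ EI], rule exI[of _ A], rule exI[of _ "[S, S']"])
    using keg ia prof u1 u2 ph1 ph2 un by (auto simp: P3)
qed

end
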